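(* Let $X$ be a real Hilbert space, $\mathsf{A}:X\to 2^X$ maximal monotone with nonempty zero set $S$, $J:=(Id+\mathsf{A})^{-1}$, and let $(x_n)$ be generated by (HPPA) from $x_0\in X$ and sequences $(\alpha_n)\subset\,]0,1[$, $(\beta_n)\subset(0,\infty)$, $(e_n)\subset X$. Let ${\rm E}:\mathbb{N}\to\mathbb{N}$ be monotone satisfying (Q4), and let $\chi_1:\mathbb{N}\to\mathbb{N}$ be a monotone function such that $\forall k\in\mathbb{N}\,\forall n\geq\chi_1(k)\ \big(\|J(x_n)-x_n\|\leq\frac{1}{k+1}\big)$. Let $p\in S$ and $N\in\mathbb{N}$ with $N\geq\max\{2\|x_0-p\|,\ \|x_0-p\|+1+\sum_{i=0}^{{\rm E}(0)}\|e_i\|\}$. Then for every $k\in\mathbb{N}$ and every monotone $f:\mathbb{N}\to\mathbb{N}$ there exist $n\leq\psi_{N,\chi_1}(k,f)$ and $x\in B_N$ such that $$\|J(x)-x\|\leq\frac{1}{f(n)+1}\quad\text{and}\quad\forall i\geq n\ \left(\langle x_0-x,\,x_i-x\rangle\leq\frac{1}{k+1}\right),$$ where $\psi_{N,\chi_1}(k,f):=\chi_1\big(24N(w_{\hat f,N}^{(R)}(0)+1)^2\big)$, $R:=4N^4(k+1)^2$, $\hat f(m):=f(\chi_1(m))$ and $w_{g,N}(m):=\max\{g(24N(m+1)^2),\,24N(m+1)^2\}$.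
   Context: $S:=\{x\in X: 0\in\mathsf{A}(x)\}$; for $\beta>0$, $J_\beta:=(Id+\beta\mathsf{A})^{-1}$ is the resolvent, a single-valued nonexpansive map whose fixed point set is $S$. (HPPA): $x_{n+1}:=\alpha_n x_0+(1-\alpha_n)(J_{\beta_n}(x_n)+e_n)$. (Q4): ${\rm E}$ is a Cauchy rate for $\sum\|e_i\|$, i.e. $\forall k\,\forall n\ \sum_{i={\rm E}(k)+1}^{{\rm E}(k)+n}\|e_i\|\leq\frac{1}{k+1}$. $B_N:=\{x\in X:\|x-p\|\leq N\}$. A function $f:\mathbb{N}\to\mathbb{N}$ is monotone if $f(n)\leq f(n+1)$ for all $n$. $g^{(R)}$ denotes $R$-fold composition ($g^{(0)}$ the identity). *)

theory Defs
  imports "HOL-Analysis.Analysis"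
begin

definition monotone_op :: "('a::real_inner \<Rightarrow> 'a set) \<Rightarrow> bool" where
  "monotone_op A \<longleftrightarrow> (\<forall>x y u v. u \<in> A x \<longrightarrow> v \<in> A y \<longrightarrow> inner (x - y) (u - v) \<ge> 0)"

definition maximal_monotone :: "('a::real_inner \<Rightarrow> 'a set) \<Rightarrow> bool" where
  "maximal_monotone A \<longleftrightarrow> monotone_op A \<and>
     (\<forall>x u. (\<forall>y v. v \<in> A y \<longrightarrow> inner (x - y) (u - v) \<ge> 0) \<longrightarrow> u \<in> A x)"

definition zeros_op :: "('a::real_vector \<Rightarrow> 'a set) \<Rightarrow> 'a set" where
  "zeros_op A = {x. 0 \<in> A x}"

text \<open>Resolvent J_beta = (Id + beta A)^{-1}: y = J_beta x iff x \<in> y + beta A(y).\<close>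
definition resolvent :: "('a::real_vector \<Rightarrow> 'a set) \<Rightarrow> real \<Rightarrow> 'a \<Rightarrow> 'a" where
  "resolvent A \<beta> x = (THE y. x \<in> (\<lambda>v. y + \<beta> *\<^sub>R v) ` A y)"

definition w_fun :: "(nat \<Rightarrow> nat) \<Rightarrow> nat \<Rightarrow> nat \<Rightarrow> nat" where
  "w_fun g N m = max (g (24 * N * (m + 1)^2)) (24 * N * (m + 1)^2)"

definition psi_bound :: "nat \<Rightarrow> (nat \<Rightarrow> nat) \<Rightarrow> nat \<Rightarrow> (nat \<Rightarrow> nat) \<Rightarrow> nat" where
  "psi_bound N \<chi>\<^sub>1 k f =
     (let R = 4 * N^4 * (k + 1)^2;
          fhat = (\<lambda>m. f (\<chi>\<^sub>1 m))
      in \<chi>\<^sub>1 (24 * N * (((w_fun fhat N) ^^ R) 0 + 1)^2))"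

end

theory Submission
  imports Defs
begin

lemma norm_comb_sq:
  fixes a b :: "'a::real_inner"
  shows "norm ((1-t) *\<^sub>R a + t *\<^sub>R b)^2 = (1-t)*norm a^2 + t*norm b^2 - t*(1-t)*norm (a-b)^2"
  by (simp add: power2_norm_eq_inner inner_add_left inner_add_right inner_diff_left inner_diff_right inner_commute algebra_simps)

lemma small_t:
  fixes L K :: real
  assumes "\<And>t. 0 < t \<Longrightarrow> t \<le> 1 \<Longrightarrow> 0 \<le> L + t * K"
  shows "0 \<le> L"
proof (rule ccontr)
  assume L: "\<not> 0 \<le> L"
  define t where "t = min 1 (-L / (\<bar>K\<bar> + 1))"
  have "L / (\<bar>K\<bar> + 1) < 0" by (rule divide_neg_pos) (use L in auto)
  then have t0: "0 < t" by (simp add: t_def)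
  have t1: "t \<le> 1" by (simp add: t_def)
  have "t * K \<le> t * \<bar>K\<bar>" using t0 by (simp add: mult_left_mono)
  also have "\<dots> \<le> (-L / (\<bar>K\<bar> + 1)) * \<bar>K\<bar>" by (rule mult_right_mono) (auto simp: t_def)
  also have "\<dots> < -L"
    using L by (simp add: field_simps)
  finally show False using assms[OF t0 t1] by linarith
qed

lemma cauchy_from_bound:
  fixes X :: "nat \<Rightarrow> 'a::real_normed_vector"
  assumes b: "\<And>a b. norm (X a - X b) ^ 2 \<le> 4 * (1 / (real a + 1) + 1 / (real b + 1))"
  shows "Cauchy X"
proof (rule metric_CauchyI)
  fix e :: real assume e: "0 < e"
  obtain M :: nat where M: "8 / e^2 < real M" using reals_Archimedean2 by blast
  have Mp: "8 / e^2 < real M + 1" using M by linarith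
  have key: "1 / (real M + 1) < e^2 / 8"
  proof -
    have "0 < 8 / e^2" using e by simp
    then have "1 / (real M + 1) < 1 / (8 / e^2)" using Mp by (intro divide_strict_left_mono) auto
    then show ?thesis by simp
  qed
  show "\<exists>M. \<forall>m\<ge>M. \<forall>n\<ge>M. dist (X m) (X n) < e"
  proof (intro exI allI impI)
    fix a b assume a: "M \<le> a" and bb: "M \<le> b"
    have "1 / (real a + 1) \<le> 1 / (real M + 1)" using a by (intro divide_left_mono) auto
    moreover have "1 / (real b + 1) \<le> 1 / (real M + 1)" using bb by (intro divide_left_mono) auto
    ultimately have "4 * (1 / (real a + 1) + 1 / (real b + 1)) < e ^ 2" using key by (simp add: ring_distribs)
    then have "norm (X a - X b) ^ 2 < e ^ 2" using b[of a b] by linarith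
    then have "norm (X a - X b) < e" using e by (simp add: power_less_imp_less_base)
    then show "dist (X a) (X b) < e" by (simp add: dist_norm)
  qed
qed


lemma minty_core:
  fixes B :: "'a::{real_inner, complete_space} \<Rightarrow> 'a set"
  assumes mm: "maximal_monotone B"
  shows "\<exists>a. - a \<in> B a"
proof -
  have mon: "\<And>x y u v. u \<in> B x \<Longrightarrow> v \<in> B y \<Longrightarrow> inner (x - y) (u - v) \<ge> 0"
    using mm unfolding maximal_monotone_def monotone_op_def by blast
  have mx: "\<And>x u. (\<And>y v. v \<in> B y \<Longrightarrow> inner (x - y) (u - v) \<ge> 0) \<Longrightarrow> u \<in> B x"
    using mm unfolding maximal_monotone_def by blast
  define \<Gamma> where "\<Gamma> = {(y,v). v \<in> B y}"
  have Gne: "\<Gamma> \<noteq> {}"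
  proof
    assume "\<Gamma> = {}"
    then have "0 \<in> B 0" by (intro mx) (auto simp: \<Gamma>_def)
    then show False using \<open>\<Gamma> = {}\<close> by (auto simp: \<Gamma>_def)
  qed
  define \<phi> where "\<phi> x u yv = inner x (snd yv) + inner (fst yv) u - inner (fst yv) (snd yv)" for x u :: 'a and yv :: "'a \<times> 'a"
  define D where "D = {(x,u). bdd_above (\<phi> x u ` \<Gamma>)}"
  define F where "F x u = Sup (\<phi> x u ` \<Gamma>)" for x u
  define G where "G x u = F x u + (norm x ^ 2 + norm u ^ 2) / 2" for x u
  have F_ub: "\<phi> x u yv \<le> F x u" if "(x,u) \<in> D" "yv \<in> \<Gamma>" for x u yv
    using that unfolding D_def F_def by (auto intro: cSup_upper)
  have F_le: "(x,u) \<in> D \<and> F x u \<le> c" if "\<And>yv. yv \<in> \<Gamma> \<Longrightarrow> \<phi> x u yv \<le> c" for x u c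
  proof
    show "(x,u) \<in> D" unfolding D_def bdd_above_def using that by blast
    show "F x u \<le> c" unfolding F_def using that Gne by (auto intro: cSup_least)
  qed
  have F_graph: "(y,v) \<in> D \<and> F y v \<le> inner y v" if "(y,v) \<in> \<Gamma>" for y v
  proof (rule F_le)
    fix yv assume "yv \<in> \<Gamma>"
    then have "inner (y - fst yv) (v - snd yv) \<ge> 0" using that mon by (auto simp: \<Gamma>_def)
    then show "\<phi> y v yv \<le> inner y v"
      by (simp add: \<phi>_def inner_diff_left inner_diff_right inner_commute)
  qed
  have F_ge: "inner x u \<le> F x u" if "(x,u) \<in> D" for x u
  proof (rule ccontr)
    assume c: "\<not> inner x u \<le> F x u"
    have "u \<in> B x"
    proof (rule mx)
      fix y v assume "v \<in> B y"
      then have "\<phi> x u (y,v) \<le> F x u" using F_ub[OF that] by (auto simp: \<Gamma>_def)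
      then show "0 \<le> inner (x - y) (u - v)" using c
        by (simp add: \<phi>_def inner_diff_left inner_diff_right inner_commute)
    qed
    then have "\<phi> x u (x,u) \<le> F x u" using F_ub[OF that] by (auto simp: \<Gamma>_def)
    then show False using c by (simp add: \<phi>_def inner_commute)
  qed
  have G_nn: "0 \<le> G x u" if "(x,u) \<in> D" for x u
  proof -
    have "0 \<le> norm (x + u) ^ 2" by simp
    also have "\<dots> = norm x ^ 2 + 2 * inner x u + norm u ^ 2"
      by (simp add: power2_norm_eq_inner inner_add_left inner_add_right inner_commute)
    finally have "0 \<le> norm x ^ 2 + 2 * inner x u + norm u ^ 2" .
    then show ?thesis using F_ge[OF that] unfolding G_def add_divide_distrib by linarith
  qed
  have conv: "((1-t) *\<^sub>R x1 + t *\<^sub>R x2, (1-t) *\<^sub>R u1 + t *\<^sub>R u2) \<in> D \<and>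
      F ((1-t) *\<^sub>R x1 + t *\<^sub>R x2) ((1-t) *\<^sub>R u1 + t *\<^sub>R u2) \<le> (1-t) * F x1 u1 + t * F x2 u2"
    if "(x1,u1) \<in> D" "(x2,u2) \<in> D" "0 \<le> t" "t \<le> 1" for x1 u1 x2 u2 t
  proof (rule F_le)
    fix yv assume yv: "yv \<in> \<Gamma>"
    have "\<phi> ((1-t) *\<^sub>R x1 + t *\<^sub>R x2) ((1-t) *\<^sub>R u1 + t *\<^sub>R u2) yv = (1-t) * \<phi> x1 u1 yv + t * \<phi> x2 u2 yv"
      by (simp add: \<phi>_def inner_add_left inner_add_right algebra_simps)
    also have "\<dots> \<le> (1-t) * F x1 u1 + t * F x2 u2"
      using F_ub[OF that(1) yv] F_ub[OF that(2) yv] that(3,4)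
      by (intro add_mono mult_left_mono) auto
    finally show "\<phi> ((1-t) *\<^sub>R x1 + t *\<^sub>R x2) ((1-t) *\<^sub>R u1 + t *\<^sub>R u2) yv \<le> (1-t) * F x1 u1 + t * F x2 u2" .
  qed
  define m where "m = Inf ((\<lambda>(x,u). G x u) ` D)"
  have Dne: "D \<noteq> {}" using Gne F_graph by auto
  have bb: "bdd_below ((\<lambda>(x,u). G x u) ` D)"
    using G_nn unfolding bdd_below_def by (intro exI[of _ 0]) auto
  have m_le: "m \<le> G x u" if "(x,u) \<in> D" for x u
    unfolding m_def using bb that by (auto intro!: cInf_lower)
  have "\<exists>z. z \<in> D \<and> (\<lambda>(x,u). G x u) z < m + 1 / (real n + 1)" for n
  proof -
    have "Inf ((\<lambda>(x,u). G x u) ` D) < m + 1 / (real n + 1)" unfolding m_def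
      by (simp add: add_pos_pos)
    from cInf_lessD[OF _ this] Dne show ?thesis by auto
  qed
  then obtain zs where zs: "\<And>n. zs n \<in> D" "\<And>n. (\<lambda>(x,u). G x u) (zs n) < m + 1 / (real n + 1)"
    by metis
  define xs where "xs n = fst (zs n)" for n
  define us where "us n = snd (zs n)" for n
  have zsD: "(xs n, us n) \<in> D" for n using zs(1) by (simp add: xs_def us_def)
  have zsG: "G (xs n) (us n) < m + 1 / (real n + 1)" for n
    using zs(2)[of n] by (simp add: xs_def us_def case_prod_beta)

  have mid: "norm (x1 - x2) ^ 2 + norm (u1 - u2) ^ 2 \<le> 4 * (G x1 u1 + G x2 u2 - 2 * m)"
    if "(x1,u1) \<in> D" "(x2,u2) \<in> D" for x1 u1 x2 u2
  proof -
    from conv[OF that, of "1/2"] have c: "((1-1/2) *\<^sub>R x1 + (1/2) *\<^sub>R x2, (1-1/2) *\<^sub>R u1 + (1/2) *\<^sub>R u2) \<in> D"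
      "F ((1-1/2) *\<^sub>R x1 + (1/2) *\<^sub>R x2) ((1-1/2) *\<^sub>R u1 + (1/2) *\<^sub>R u2) \<le> (1-1/2) * F x1 u1 + (1/2) * F x2 u2"
      by auto
    have "m \<le> G ((1-1/2) *\<^sub>R x1 + (1/2) *\<^sub>R x2) ((1-1/2) *\<^sub>R u1 + (1/2) *\<^sub>R u2)" using m_le c(1) by blast
    then show ?thesis using c(2) norm_comb_sq[of "1/2" x1 x2] norm_comb_sq[of "1/2" u1 u2]
      unfolding G_def by (simp add: algebra_simps add_divide_distrib)
  qed
  have zb: "norm (xs a - xs b) ^ 2 + norm (us a - us b) ^ 2 \<le> 4 * (1 / (real a + 1) + 1 / (real b + 1))" for a b
    using mid[OF zsD zsD, of a b] zsG[of a] zsG[of b] by (simp add: ring_distribs)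
  have "Cauchy xs"
    by (rule cauchy_from_bound) (use zb in \<open>smt (verit) zero_le_power2\<close>)
  then obtain xb where xb: "xs \<longlonglongrightarrow> xb" using Cauchy_convergent convergent_def by blast
  have "Cauchy us"
    by (rule cauchy_from_bound) (use zb in \<open>smt (verit) zero_le_power2\<close>)
  then obtain ub where ub: "us \<longlonglongrightarrow> ub" using Cauchy_convergent convergent_def by blast
  have lim0: "(\<lambda>n. 1 / (real n + 1)) \<longlonglongrightarrow> 0"
    using LIMSEQ_inverse_real_of_nat_add[of 0] by (simp add: divide_inverse add.commute)
  have minD: "(xb, ub) \<in> D \<and> F xb ub \<le> m - (norm xb ^ 2 + norm ub ^ 2) / 2"
  proof (rule F_le)
    fix yv assume yv: "yv \<in> \<Gamma>"
    have le: "\<phi> (xs n) (us n) yv \<le> m + 1 / (real n + 1) - (norm (xs n) ^ 2 + norm (us n) ^ 2) / 2" for n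
      using F_ub[OF zsD yv, of n] zsG[of n] unfolding G_def by linarith
    have t1: "(\<lambda>n. \<phi> (xs n) (us n) yv) \<longlonglongrightarrow> \<phi> xb ub yv"
      unfolding \<phi>_def by (intro tendsto_intros xb ub)
    have t2: "(\<lambda>n. m + 1 / (real n + 1) - (norm (xs n) ^ 2 + norm (us n) ^ 2) / 2) \<longlonglongrightarrow> m + 0 - (norm xb ^ 2 + norm ub ^ 2) / 2"
      by (intro tendsto_intros xb ub lim0) auto
    show "\<phi> xb ub yv \<le> m - (norm xb ^ 2 + norm ub ^ 2) / 2"
      using LIMSEQ_le[OF t1 t2] le by auto
  qed
  have Gmin: "G xb ub \<le> G x u" if "(x,u) \<in> D" for x u
    using minD m_le[OF that] unfolding G_def by linarith

  have xbD: "(xb, ub) \<in> D" using minD by blast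
  have var: "0 \<le> inner y v - F xb ub + inner xb y - inner xb xb + inner ub v - inner ub ub"
    if yv: "v \<in> B y" for y v
  proof -
    have gy: "(y,v) \<in> D" "F y v \<le> inner y v" using F_graph[of y v] yv by (auto simp: \<Gamma>_def)
    define L where "L = inner y v - F xb ub + (norm y ^ 2 - norm xb ^ 2 + norm v ^ 2 - norm ub ^ 2) / 2
       - (norm (xb - y) ^ 2 + norm (ub - v) ^ 2) / 2"
    define K where "K = (norm (xb - y) ^ 2 + norm (ub - v) ^ 2) / 2"
    have "0 \<le> L + t * K" if t: "0 < t" "t \<le> 1" for t
    proof -
      from conv[OF xbD gy(1), of t] t have c:
        "((1-t) *\<^sub>R xb + t *\<^sub>R y, (1-t) *\<^sub>R ub + t *\<^sub>R v) \<in> D"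
        "F ((1-t) *\<^sub>R xb + t *\<^sub>R y) ((1-t) *\<^sub>R ub + t *\<^sub>R v) \<le> (1-t) * F xb ub + t * F y v"
        by auto
      have g: "G xb ub \<le> G ((1-t) *\<^sub>R xb + t *\<^sub>R y) ((1-t) *\<^sub>R ub + t *\<^sub>R v)" using Gmin c(1) by blast
      have tF: "t * F y v \<le> t * inner y v" using gy(2) t by (simp add: mult_left_mono)
      have "0 \<le> t * (L + t * K)"
        using g c(2) tF norm_comb_sq[of t xb y] norm_comb_sq[of t ub v]
        unfolding G_def L_def K_def by (simp add: algebra_simps add_divide_distrib diff_divide_distrib)
      then show ?thesis using t by (simp add: zero_le_mult_iff)
    qed
    then have "0 \<le> L" by (rule small_t)
    moreover have "norm (xb - y) ^ 2 = inner xb xb - 2 * inner xb y + inner y y"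
      by (simp add: power2_norm_eq_inner inner_diff_left inner_diff_right inner_commute)
    moreover have "norm (ub - v) ^ 2 = inner ub ub - 2 * inner ub v + inner v v"
      by (simp add: power2_norm_eq_inner inner_diff_left inner_diff_right inner_commute)
    ultimately show ?thesis unfolding L_def power2_norm_eq_inner
      by (simp add: add_divide_distrib diff_divide_distrib)
  qed
  have rel: "norm (xb + ub) ^ 2 \<le> inner (ub + y) (xb + v)" if "v \<in> B y" for y v
  proof -
    have "inner xb ub \<le> F xb ub" using F_ge[OF xbD] .
    then show ?thesis using var[OF that]
      by (simp add: power2_norm_eq_inner inner_add_left inner_add_right inner_commute algebra_simps)
  qed
  have inB: "- xb \<in> B (- ub)"
  proof (rule mx)
    fix y v assume "v \<in> B y"
    from rel[OF this] have "0 \<le> inner (ub + y) (xb + v)" by (meson order_trans zero_le_power2)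
    then show "0 \<le> inner (- ub - y) (- xb - v)"
      by (simp add: inner_diff_left inner_diff_right inner_add_left inner_add_right algebra_simps)
  qed
  from rel[OF inB] have "norm (xb + ub) ^ 2 \<le> 0" by simp
  then have "xb + ub = 0" by simp
  then have "xb = - ub" by (simp add: add_eq_0_iff2)
  then show ?thesis using inB by (intro exI[of _ "- ub"]) simp
qed

lemma resolvent_exists:
  fixes A :: "'a::{real_inner, complete_space} \<Rightarrow> 'a set"
  assumes mm: "maximal_monotone A" and b: "0 < \<beta>"
  shows "\<exists>y. x \<in> (\<lambda>v. y + \<beta> *\<^sub>R v) ` A y"
proof -
  have mon: "\<And>x y u v. u \<in> A x \<Longrightarrow> v \<in> A y \<Longrightarrow> inner (x - y) (u - v) \<ge> 0"
    using mm unfolding maximal_monotone_def monotone_op_def by blast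
  have mx: "\<And>x u. (\<And>y v. v \<in> A y \<Longrightarrow> inner (x - y) (u - v) \<ge> 0) \<Longrightarrow> u \<in> A x"
    using mm unfolding maximal_monotone_def by blast
  define B where "B y = (\<lambda>v. \<beta> *\<^sub>R v - x) ` A y" for y
  have "maximal_monotone B"
    unfolding maximal_monotone_def monotone_op_def
  proof (intro conjI allI impI)
    fix z y u v assume "u \<in> B z" "v \<in> B y"
    then obtain u' v' where u': "u' \<in> A z" "u = \<beta> *\<^sub>R u' - x" and v': "v' \<in> A y" "v = \<beta> *\<^sub>R v' - x"
      by (auto simp: B_def)
    have "0 \<le> \<beta> * inner (z - y) (u' - v')" using mon[OF u'(1) v'(1)] b by simp
    moreover have "u - v = \<beta> *\<^sub>R (u' - v')" using u'(2) v'(2) by (simp add: scaleR_diff_right)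
    ultimately show "0 \<le> inner (z - y) (u - v)" by simp
  next
    fix z u assume h: "\<forall>y v. v \<in> B y \<longrightarrow> 0 \<le> inner (z - y) (u - v)"
    have "(1/\<beta>) *\<^sub>R (u + x) \<in> A z"
    proof (rule mx)
      fix y v assume v: "v \<in> A y"
      then have "\<beta> *\<^sub>R v - x \<in> B y" unfolding B_def by (rule imageI)
      with h have "0 \<le> inner (z - y) (u - (\<beta> *\<^sub>R v - x))" by blast
      also have "u - (\<beta> *\<^sub>R v - x) = \<beta> *\<^sub>R ((1/\<beta>) *\<^sub>R (u + x) - v)" using b by (simp add: algebra_simps)
      finally have "0 \<le> \<beta> * inner (z - y) ((1/\<beta>) *\<^sub>R (u + x) - v)" by simp
      then show "0 \<le> inner (z - y) ((1/\<beta>) *\<^sub>R (u + x) - v)" using b by (simp add: zero_le_mult_iff)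
    qed
    moreover have "u = \<beta> *\<^sub>R ((1/\<beta>) *\<^sub>R (u + x)) - x" using b by simp
    ultimately show "u \<in> B z" unfolding B_def by blast
  qed
  from minty_core[OF this] obtain a where "- a \<in> B a" by blast
  then obtain v where v: "v \<in> A a" "- a = \<beta> *\<^sub>R v - x" by (auto simp: B_def)
  then have "x = a + \<beta> *\<^sub>R v" by (simp add: algebra_simps)
  then show ?thesis using v by blast
qed

lemma resolvent_unique:
  fixes A :: "'a::real_inner \<Rightarrow> 'a set"
  assumes mo: "monotone_op A" and b: "0 < \<beta>"
    and h1: "x \<in> (\<lambda>v. y1 + \<beta> *\<^sub>R v) ` A y1" and h2: "x \<in> (\<lambda>v. y2 + \<beta> *\<^sub>R v) ` A y2"
  shows "y1 = y2"
proof -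
  obtain u1 u2 where u: "u1 \<in> A y1" "x = y1 + \<beta> *\<^sub>R u1" "u2 \<in> A y2" "x = y2 + \<beta> *\<^sub>R u2"
    using h1 h2 by blast
  have i: "0 \<le> inner (y1 - y2) (u1 - u2)" using mo u unfolding monotone_op_def by blast
  have "\<beta> *\<^sub>R (u1 - u2) = y2 - y1" using u by (simp add: algebra_simps)
  then have "0 \<le> \<beta> * inner (y1 - y2) (u1 - u2)" "\<beta> * inner (y1 - y2) (u1 - u2) = - inner (y1 - y2) (y1 - y2)"
    using i b by (simp_all, metis inner_minus_right inner_scaleR_right minus_diff_eq)
  then have "inner (y1 - y2) (y1 - y2) \<le> 0" by linarith
  then have "inner (y1 - y2) (y1 - y2) = 0" using inner_ge_zero[of "y1 - y2"] by linarith
  then show ?thesis by simp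
qed

lemma resolvent_char:
  fixes A :: "'a::{real_inner, complete_space} \<Rightarrow> 'a set"
  assumes mm: "maximal_monotone A" and b: "0 < \<beta>"
  shows "x \<in> (\<lambda>v. resolvent A \<beta> x + \<beta> *\<^sub>R v) ` A (resolvent A \<beta> x)"
proof -
  have mo: "monotone_op A" using mm by (simp add: maximal_monotone_def)
  obtain y where y: "x \<in> (\<lambda>v. y + \<beta> *\<^sub>R v) ` A y" using resolvent_exists[OF mm b] by blast
  have "\<exists>!y. x \<in> (\<lambda>v. y + \<beta> *\<^sub>R v) ` A y"
    using y resolvent_unique[OF mo b] by blast
  then show ?thesis unfolding resolvent_def by (rule theI')
qed

lemma resolvent_fix:
  fixes A :: "'a::real_inner \<Rightarrow> 'a set"
  assumes mo: "monotone_op A" and b: "0 < \<beta>" and p: "p \<in> zeros_op A"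
  shows "resolvent A \<beta> p = p"
proof -
  have h: "p \<in> (\<lambda>v. p + \<beta> *\<^sub>R v) ` A p" using p by (force simp: zeros_op_def)
  have "\<exists>!y. p \<in> (\<lambda>v. y + \<beta> *\<^sub>R v) ` A y"
    using h resolvent_unique[OF mo b] by blast
  then have "p \<in> (\<lambda>v. resolvent A \<beta> p + \<beta> *\<^sub>R v) ` A (resolvent A \<beta> p)"
    unfolding resolvent_def by (rule theI')
  from resolvent_unique[OF mo b this h] show ?thesis .
qed

lemma resolvent_nonexp:
  fixes A :: "'a::{real_inner, complete_space} \<Rightarrow> 'a set"
  assumes mm: "maximal_monotone A" and b: "0 < \<beta>"
  shows "norm (resolvent A \<beta> x - resolvent A \<beta> x') \<le> norm (x - x')"
proof -
  define j where "j = resolvent A \<beta> x"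
  define j' where "j' = resolvent A \<beta> x'"
  obtain u u' where u: "u \<in> A j" "x = j + \<beta> *\<^sub>R u" "u' \<in> A j'" "x' = j' + \<beta> *\<^sub>R u'"
    using resolvent_char[OF mm b, of x] resolvent_char[OF mm b, of x'] unfolding j_def j'_def by blast
  have i: "0 \<le> inner (j - j') (u - u')" using mm u unfolding maximal_monotone_def monotone_op_def by blast
  have "x - x' = (j - j') + \<beta> *\<^sub>R (u - u')" using u by (simp add: algebra_simps)
  then have "inner (j - j') (x - x') = inner (j - j') (j - j') + \<beta> * inner (j - j') (u - u')"
    by (simp add: inner_add_right)
  moreover have "0 \<le> \<beta> * inner (j - j') (u - u')" using i b by simp
  ultimately have "norm (j - j') ^ 2 \<le> inner (j - j') (x - x')" by (simp add: power2_norm_eq_inner)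
  also have "\<dots> \<le> norm (j - j') * norm (x - x')" by (rule norm_cauchy_schwarz)
  finally have "norm (j - j') * norm (j - j') \<le> norm (j - j') * norm (x - x')" by (simp add: power2_eq_square)
  then show ?thesis unfolding j_def[symmetric] j'_def[symmetric]
    by (cases "norm (j - j') = 0") (simp_all add: mult_le_cancel_left)
qed

lemma approx_comb:
  fixes J :: "'a::real_inner \<Rightarrow> 'a"
  assumes ne: "\<And>a b. norm (J a - J b) \<le> norm (a - b)"
    and t: "0 \<le> t" "t \<le> 1"
    and hy: "norm (J y - y) \<le> \<delta>" and hz: "norm (J z - z) \<le> \<delta>"
    and D: "norm (y - z) \<le> 2 * N" and d1: "\<delta> \<le> 1" and N1: "1 \<le> N"
  shows "norm (J ((1-t) *\<^sub>R y + t *\<^sub>R z) - ((1-t) *\<^sub>R y + t *\<^sub>R z)) ^ 2 \<le> 3 * N * \<delta>"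
proof -
  define y' where "y' = (1-t) *\<^sub>R y + t *\<^sub>R z"
  define q where "q = J y'"
  define Dd where "Dd = norm (y - z)"
  have d0: "0 \<le> \<delta>" using hy norm_ge_zero order_trans by blast
  have "y' - q = (1-t) *\<^sub>R (y - q) + t *\<^sub>R (z - q)" unfolding y'_def by (simp add: algebra_simps)
  then have e1: "norm (y' - q) ^ 2 = (1-t) * norm (y - q) ^ 2 + t * norm (z - q) ^ 2 - t * (1-t) * Dd ^ 2"
    using norm_comb_sq[of t "y - q" "z - q"] by (simp add: Dd_def)
  have "y - y' = t *\<^sub>R (y - z)" unfolding y'_def by (simp add: algebra_simps)
  then have nyy: "norm (y - y') = t * Dd" using t by (simp add: Dd_def)
  have "z - y' = (1-t) *\<^sub>R (z - y)" unfolding y'_def by (simp add: algebra_simps)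
  then have nzy: "norm (z - y') = (1-t) * Dd" using t by (simp add: Dd_def norm_minus_commute)
  have P: "norm (y - q) \<le> \<delta> + t * Dd"
  proof -
    have "norm (y - q) \<le> norm (y - J y) + norm (J y - q)" using norm_triangle_ineq[of "y - J y" "J y - q"] by simp
    also have "norm (J y - q) \<le> t * Dd" using ne[of y y'] nyy by (simp add: q_def)
    finally show ?thesis using hy by (simp add: norm_minus_commute)
  qed
  have Q: "norm (z - q) \<le> \<delta> + (1-t) * Dd"
  proof -
    have "norm (z - q) \<le> norm (z - J z) + norm (J z - q)" using norm_triangle_ineq[of "z - J z" "J z - q"] by simp
    also have "norm (J z - q) \<le> (1-t) * Dd" using ne[of z y'] nzy by (simp add: q_def)
    finally show ?thesis using hz by (simp add: norm_minus_commute)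
  qed
  have P2: "(1-t) * norm (y - q) ^ 2 \<le> (1-t) * (\<delta> + t * Dd) ^ 2"
    using P t by (intro mult_left_mono power_mono) auto
  have Q2: "t * norm (z - q) ^ 2 \<le> t * (\<delta> + (1-t) * Dd) ^ 2"
    using Q t by (intro mult_left_mono power_mono) auto
  have id: "(1-t) * (\<delta> + t * Dd) ^ 2 + t * (\<delta> + (1-t) * Dd) ^ 2 - t * (1-t) * Dd ^ 2
      = \<delta>^2 + 4 * (t * (1-t)) * (Dd * \<delta>)"
    by (simp add: power2_eq_square algebra_simps)
  have tt: "t * (1-t) \<le> 1/4"
  proof -
    have "0 \<le> (2*t - 1)^2" by simp
    then show ?thesis by (simp add: power2_eq_square algebra_simps)
  qed
  have tt0: "0 \<le> t * (1-t)" using t by simp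
  have Dd0: "0 \<le> Dd * \<delta>" using d0 by (simp add: Dd_def)
  have "4 * (t * (1-t)) * (Dd * \<delta>) \<le> 4 * (1/4) * (Dd * \<delta>)"
    using tt Dd0 by (intro mult_right_mono) auto
  also have "\<dots> \<le> 2 * N * \<delta>" using D d0 by (simp add: Dd_def mult_right_mono)
  finally have a1: "4 * (t * (1-t)) * (Dd * \<delta>) \<le> 2 * N * \<delta>" .
  have a2: "\<delta>^2 \<le> N * \<delta>"
  proof -
    have "\<delta>^2 \<le> 1 * \<delta>" using mult_left_le[OF d1 d0] by (simp add: power2_eq_square)
    also have "\<dots> \<le> N * \<delta>" using N1 d0 by (intro mult_right_mono) auto
    finally show ?thesis .
  qed
  have "norm (y' - q) ^ 2 \<le> 3 * N * \<delta>" using e1 P2 Q2 id a1 a2 by linarith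
  then show ?thesis by (simp add: y'_def q_def norm_minus_commute)
qed

lemma sum_e_bound:
  fixes e :: "nat \<Rightarrow> 'a::real_normed_vector"
  assumes Q4: "\<And>k n. (\<Sum>i = E k + 1 .. E k + n. norm (e i)) \<le> 1 / (real k + 1)"
  shows "(\<Sum>i<n. norm (e i)) \<le> (\<Sum>i = 0 .. E 0. norm (e i)) + 1"
proof (cases "n \<le> E 0 + 1")
  case True
  have "(\<Sum>i<n. norm (e i)) \<le> (\<Sum>i = 0 .. E 0. norm (e i))"
    by (rule sum_mono2) (use True in auto)
  then show ?thesis by linarith
next
  case False
  define d where "d = n - (E 0 + 1)"
  have n: "n = E 0 + 1 + d" using False by (simp add: d_def)
  have "(\<Sum>i<n. norm (e i)) = (\<Sum>i = 0..<E 0 + 1. norm (e i)) + (\<Sum>i = E 0 + 1..<n. norm (e i))"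
    unfolding lessThan_atLeast0 by (rule sum.atLeastLessThan_concat[symmetric]) (use n in auto)
  also have "{0..<E 0 + 1} = {0..E 0}" by auto
  also have "{E 0 + 1..<n} = {E 0 + 1..E 0 + d}" using n by auto
  finally show ?thesis using Q4[of 0 d] by simp
qed

lemma iter_mono:
  fixes w :: "nat \<Rightarrow> nat"
  assumes "\<And>m. m \<le> w m" and "a \<le> b"
  shows "(w ^^ a) 0 \<le> (w ^^ b) 0"
  by (rule lift_Suc_mono_le[of "\<lambda>n. (w ^^ n) 0"]) (use assms in auto)

theorem mainTheorem4:
  fixes A :: "'a::{real_inner, complete_space} \<Rightarrow> 'a set"
    and x :: "nat \<Rightarrow> 'a" and e :: "nat \<Rightarrow> 'a"
    and \<alpha> \<beta> :: "nat \<Rightarrow> real"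
    and E \<chi>\<^sub>1 :: "nat \<Rightarrow> nat"
    and p :: 'a and N :: nat
  assumes maxmono: "maximal_monotone A"
    and S_ne: "zeros_op A \<noteq> {}"
    and alpha: "\<And>n. 0 < \<alpha> n \<and> \<alpha> n < 1"
    and beta: "\<And>n. 0 < \<beta> n"
    and HPPA: "\<And>n. x (Suc n) = \<alpha> n *\<^sub>R x 0 + (1 - \<alpha> n) *\<^sub>R (resolvent A (\<beta> n) (x n) + e n)"
    and E_mono: "mono E"
    and Q4: "\<And>k n. (\<Sum>i = E k + 1 .. E k + n. norm (e i)) \<le> 1 / (real k + 1)"
    and chi_mono: "mono \<chi>\<^sub>1"
    and chi: "\<And>k n. n \<ge> \<chi>\<^sub>1 k \<Longrightarrow> norm (resolvent A 1 (x n) - x n) \<le> 1 / (real k + 1)"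
    and p: "p \<in> zeros_op A"
    and N: "real N \<ge> max (2 * norm (x 0 - p)) (norm (x 0 - p) + 1 + (\<Sum>i = 0 .. E 0. norm (e i)))"
  shows "\<forall>k. \<forall>f::nat \<Rightarrow> nat. mono f \<longrightarrow>
           (\<exists>n \<le> psi_bound N \<chi>\<^sub>1 k f. \<exists>y. norm (y - p) \<le> real N \<and>
              norm (resolvent A 1 y - y) \<le> 1 / (real (f n) + 1) \<and>
              (\<forall>i \<ge> n. inner (x 0 - y) (x i - y) \<le> 1 / (real k + 1)))"
proof (intro allI impI)
  fix k and f :: "nat \<Rightarrow> nat" assume fmono: "mono f"
  have mo: "monotone_op A" using maxmono by (simp add: maximal_monotone_def)
  define J where "J = resolvent A 1"
  have Jne: "norm (J a - J b) \<le> norm (a - b)" for a b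
    unfolding J_def by (rule resolvent_nonexp[OF maxmono]) simp
  have Jp: "J p = p" unfolding J_def by (rule resolvent_fix[OF mo _ p]) simp
  have N0: "norm (x 0 - p) \<le> real N / 2" using N by simp
  have Nb: "norm (x 0 - p) + 1 + (\<Sum>i = 0 .. E 0. norm (e i)) \<le> real N" using N by simp
  have N1: "1 \<le> real N"
  proof -
    have "0 \<le> (\<Sum>i = 0 .. E 0. norm (e i))" by (simp add: sum_nonneg)
    then show ?thesis using Nb norm_ge_zero[of "x 0 - p"] by linarith
  qed
  have xb0: "norm (x n - p) \<le> norm (x 0 - p) + (\<Sum>i<n. norm (e i))" for n
  proof (induction n)
    case 0 show ?case by simp
  next
    case (Suc n)
    define M where "M = norm (x 0 - p) + (\<Sum>i<n. norm (e i))"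
    define r where "r = resolvent A (\<beta> n) (x n)"
    have a: "0 < \<alpha> n" "\<alpha> n < 1" using alpha[of n] by auto
    have jn: "norm (r - p) \<le> norm (x n - p)"
      using resolvent_nonexp[OF maxmono beta, of n "x n" p] resolvent_fix[OF mo beta p, of n]
      by (simp add: r_def)
    have eq: "x (Suc n) - p = \<alpha> n *\<^sub>R (x 0 - p) + (1 - \<alpha> n) *\<^sub>R ((r - p) + e n)"
      using HPPA[of n] by (simp add: r_def algebra_simps)
    have "norm (x (Suc n) - p) \<le> norm (\<alpha> n *\<^sub>R (x 0 - p)) + norm ((1 - \<alpha> n) *\<^sub>R ((r - p) + e n))"
      unfolding eq by (rule norm_triangle_ineq)
    also have "\<dots> = \<alpha> n * norm (x 0 - p) + (1 - \<alpha> n) * norm ((r - p) + e n)"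
      using a by simp
    also have "\<dots> \<le> \<alpha> n * (M + norm (e n)) + (1 - \<alpha> n) * (M + norm (e n))"
    proof (intro add_mono mult_left_mono)
      show "norm (x 0 - p) \<le> M + norm (e n)" unfolding M_def
        by (simp add: sum_nonneg)
      have "norm ((r - p) + e n) \<le> norm (r - p) + norm (e n)" by (rule norm_triangle_ineq)
      then show "norm ((r - p) + e n) \<le> M + norm (e n)" using jn Suc.IH unfolding M_def by linarith
    qed (use a in auto)
    also have "\<dots> = M + norm (e n)" by (simp add: algebra_simps)
    finally show ?case by (simp add: M_def)
  qed
  have xb: "norm (x n - p) \<le> real N" for n
    using xb0[of n] sum_e_bound[OF Q4, of n] Nb by linarith
  define \<epsilon> where "\<epsilon> = 1 / (real k + 1)"
  have e0: "0 < \<epsilon>" "\<epsilon> \<le> 1" by (auto simp: \<epsilon>_def)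
  define t where "t = \<epsilon> / (4 * real N ^ 2)"
  have N2: "1 \<le> real N ^ 2" using N1 by (simp add: one_le_power)
  have t0: "0 < t" using e0 N1 by (simp add: t_def)
  have t1: "t \<le> 1" using e0 N2 unfolding t_def by (simp add: divide_le_eq)
  have t4: "t * (4 * real N ^ 2) = \<epsilon>" using N1 by (simp add: t_def)
  define c where "c = t * \<epsilon>"
  have c0: "0 < c" using t0 e0 by (simp add: c_def)
  define fhat where "fhat = (\<lambda>m. f (\<chi>\<^sub>1 m))"
  define w where "w = w_fun fhat N"
  define R where "R = 4 * N ^ 4 * (k + 1) ^ 2"
  define M0 where "M0 = (w ^^ R) 0"
  have psi: "psi_bound N \<chi>\<^sub>1 k f = \<chi>\<^sub>1 (24 * N * (M0 + 1) ^ 2)"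
    by (simp add: psi_bound_def Let_def M0_def w_def R_def fhat_def)
  have wge: "24 * N * (m + 1) ^ 2 \<le> w m" for m by (simp add: w_def w_fun_def)
  have wf: "fhat (24 * N * (m + 1) ^ 2) \<le> w m" for m by (simp add: w_def w_fun_def)
  have Nn: "1 \<le> N" using N1 by simp
  have wm: "m \<le> w m" for m
  proof -
    have "m \<le> (m + 1) ^ 2" by (simp add: power2_eq_square)
    also have "\<dots> \<le> 24 * N * (m + 1) ^ 2" using Nn by simp
    also have "\<dots> \<le> w m" by (rule wge)
    finally show ?thesis .
  qed
  define Goal where "Goal = (\<exists>n \<le> psi_bound N \<chi>\<^sub>1 k f. \<exists>y. norm (y - p) \<le> real N \<and>
              norm (J y - y) \<le> 1 / (real (f n) + 1) \<and>
              (\<forall>i \<ge> n. inner (x 0 - y) (x i - y) \<le> \<epsilon>))"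
  have step: "Goal \<or> (\<exists>y'. norm (y' - p) \<le> real N \<and> norm (J y' - y') \<le> 1 / (real mm + 1) \<and>
       norm (x 0 - y') ^ 2 \<le> norm (x 0 - y) ^ 2 - c)"
    if mmM: "mm \<le> M0" and yp: "norm (y - p) \<le> real N" and yJ: "norm (J y - y) \<le> 1 / (real (w mm) + 1)"
    for mm y
  proof -
    define K where "K = 24 * N * (mm + 1) ^ 2"
    define n0 where "n0 = \<chi>\<^sub>1 K"
    have "K \<le> 24 * N * (M0 + 1) ^ 2" unfolding K_def using mmM
      by (intro mult_le_mono2 power_mono) auto
    then have n0psi: "n0 \<le> psi_bound N \<chi>\<^sub>1 k f"
      unfolding psi n0_def by (rule monoD[OF chi_mono])
    have fn0: "f n0 \<le> w mm" using wf[of mm] by (simp add: n0_def K_def fhat_def)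
    have "1 / (real (w mm) + 1) \<le> 1 / (real (f n0) + 1)"
      by (rule divide_left_mono) (use fn0 in auto)
    then have yJ': "norm (J y - y) \<le> 1 / (real (f n0) + 1)" using yJ by linarith
    show ?thesis
    proof (cases "\<forall>i \<ge> n0. inner (x 0 - y) (x i - y) \<le> \<epsilon>")
      case True
      then have Goal unfolding Goal_def using n0psi yp yJ' by blast
      then show ?thesis by blast
    next
      case False
      then obtain i where i: "n0 \<le> i" "\<epsilon> < inner (x 0 - y) (x i - y)" by auto
      define z where "z = x i"
      define \<delta> where "\<delta> = 1 / (real K + 1)"
      have zJ: "norm (J z - z) \<le> \<delta>" using chi[of K i] i(1) unfolding n0_def J_def z_def \<delta>_def by simp
      have Kw: "real K \<le> real (w mm)" using wge[of mm] unfolding K_def of_nat_le_iff .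
      have "1 / (real (w mm) + 1) \<le> \<delta>" unfolding \<delta>_def
        by (rule divide_left_mono) (use Kw in auto)
      then have yJd: "norm (J y - y) \<le> \<delta>" using yJ by linarith
      have d1: "\<delta> \<le> 1" by (simp add: \<delta>_def)
      have zp: "norm (z - p) \<le> real N" unfolding z_def by (rule xb)
      have Dyz: "norm (y - z) \<le> 2 * real N"
        using norm_triangle_ineq4[of "y - p" "z - p"] yp zp by simp
      define y' where "y' = (1 - t) *\<^sub>R y + t *\<^sub>R z"
      have fx: "norm (J y' - y') ^ 2 \<le> 3 * real N * \<delta>" unfolding y'_def
        by (rule approx_comb[OF Jne _ t1 yJd zJ Dyz d1 N1]) (use t0 in simp)
      have s1: "1 \<le> (real mm + 1) ^ 2" by (simp add: one_le_power)
      have rK: "real K = 24 * real N * (real mm + 1) ^ 2" by (simp add: K_def)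
      have "3 * real N * \<delta> \<le> 1 / (real mm + 1) ^ 2"
      proof -
        have "3 * real N * (real mm + 1) ^ 2 \<le> real K + 1" unfolding rK
          using N1 s1 by (simp add: mult_nonneg_nonneg)
        then show ?thesis unfolding \<delta>_def using s1 by (simp add: field_simps)
      qed
      then have "norm (J y' - y') ^ 2 \<le> (1 / (real mm + 1)) ^ 2" using fx by (simp add: power_divide)
      then have fx': "norm (J y' - y') \<le> 1 / (real mm + 1)" by (rule power2_le_imp_le) simp
      have "y' - p = (1 - t) *\<^sub>R (y - p) + t *\<^sub>R (z - p)" unfolding y'_def by (simp add: algebra_simps)
      then have "norm (y' - p) \<le> (1 - t) * norm (y - p) + t * norm (z - p)"
        using norm_triangle_ineq[of "(1 - t) *\<^sub>R (y - p)" "t *\<^sub>R (z - p)"] t0 t1 by simp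
      also have "\<dots> \<le> (1 - t) * real N + t * real N"
        using yp zp t0 t1 by (intro add_mono mult_left_mono) auto
      finally have y'p: "norm (y' - p) \<le> real N" by (simp add: algebra_simps)
      define a where "a = x 0 - y"
      define b where "b = z - y"
      have eqa: "x 0 - y' = a - t *\<^sub>R b" unfolding a_def b_def y'_def by (simp add: algebra_simps)
      have "inner (a - t *\<^sub>R b) (a - t *\<^sub>R b) = inner a a - 2 * t * inner a b + t * t * inner b b"
        by (simp add: inner_diff_left inner_diff_right inner_commute algebra_simps)
      then have nd: "norm (x 0 - y') ^ 2 = norm a ^ 2 - 2 * t * inner a b + t ^ 2 * norm b ^ 2"
        unfolding eqa power2_norm_eq_inner by (simp add: power2_eq_square)
      have ab: "\<epsilon> < inner a b" using i(2) by (simp add: a_def b_def z_def)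
      have "norm b \<le> 2 * real N" using Dyz by (simp add: b_def norm_minus_commute)
      then have "norm b ^ 2 \<le> (2 * real N) ^ 2" by (intro power_mono) auto
      then have "t ^ 2 * norm b ^ 2 \<le> t ^ 2 * (4 * real N ^ 2)" by (simp add: power_mult_distrib mult_left_mono)
      also have "\<dots> = t * \<epsilon>" using t4 by (simp add: power2_eq_square algebra_simps)
      finally have q1: "t ^ 2 * norm b ^ 2 \<le> c" by (simp add: c_def)
      have q2: "2 * t * \<epsilon> \<le> 2 * t * inner a b" using ab t0 by simp
      have "norm (x 0 - y') ^ 2 \<le> norm (x 0 - y) ^ 2 - c"
        using nd q1 q2 unfolding c_def a_def by linarith
      then show ?thesis using y'p fx' by blast
    qed
  qed
  define mj where "mj j = (w ^^ (R - j)) 0" for j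
  have mjM: "mj j \<le> M0" for j unfolding mj_def M0_def by (rule iter_mono[OF wm]) simp
  have mjS: "mj j = w (mj (Suc j))" if "j < R" for j
  proof -
    have "R - j = Suc (R - Suc j)" using that by simp
    then show ?thesis unfolding mj_def by simp
  qed
  have ind: "Goal \<or> (\<exists>y. norm (y - p) \<le> real N \<and> norm (J y - y) \<le> 1 / (real (w (mj j)) + 1) \<and>
      norm (x 0 - y) ^ 2 \<le> norm (x 0 - p) ^ 2 - real j * c)" if "j \<le> R" for j
    using that
  proof (induction j)
    case 0
    show ?case using Jp by (intro disjI2 exI[of _ p]) simp
  next
    case (Suc j)
    from Suc.IH Suc.prems have "Goal \<or> (\<exists>y. norm (y - p) \<le> real N \<and> norm (J y - y) \<le> 1 / (real (w (mj j)) + 1) \<and>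
      norm (x 0 - y) ^ 2 \<le> norm (x 0 - p) ^ 2 - real j * c)" by simp
    then show ?case
    proof
      assume Goal then show ?case by blast
    next
      assume "\<exists>y. norm (y - p) \<le> real N \<and> norm (J y - y) \<le> 1 / (real (w (mj j)) + 1) \<and>
        norm (x 0 - y) ^ 2 \<le> norm (x 0 - p) ^ 2 - real j * c"
      then obtain y where y: "norm (y - p) \<le> real N" "norm (J y - y) \<le> 1 / (real (w (mj j)) + 1)"
        "norm (x 0 - y) ^ 2 \<le> norm (x 0 - p) ^ 2 - real j * c" by blast
      from step[OF mjM y(1,2)] show ?case
      proof
        assume Goal then show ?case by blast
      next
        assume "\<exists>y'. norm (y' - p) \<le> real N \<and> norm (J y' - y') \<le> 1 / (real (mj j) + 1) \<and>
          norm (x 0 - y') ^ 2 \<le> norm (x 0 - y) ^ 2 - c"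
        then obtain y' where y': "norm (y' - p) \<le> real N" "norm (J y' - y') \<le> 1 / (real (mj j) + 1)"
          "norm (x 0 - y') ^ 2 \<le> norm (x 0 - y) ^ 2 - c" by blast
        have "mj j = w (mj (Suc j))" using mjS Suc.prems by simp
        then have "norm (J y' - y') \<le> 1 / (real (w (mj (Suc j))) + 1)" using y'(2) by simp
        moreover have "norm (x 0 - y') ^ 2 \<le> norm (x 0 - p) ^ 2 - real (Suc j) * c"
          using y(3) y'(3) by (simp add: algebra_simps)
        ultimately show ?case using y'(1) by blast
      qed
    qed
  qed
  have RC: "real R * c = real N ^ 2"
  proof -
    define P where "P = 4 * real N ^ 2 * (real k + 1) ^ 2"
    have RP: "real R = real N ^ 2 * P" unfolding R_def P_def
      by (simp add: algebra_simps power2_eq_square power4_eq_xxxx)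
    have ek: "\<epsilon> * (real k + 1) = 1" by (simp add: \<epsilon>_def)
    have "c * P = (t * (4 * real N ^ 2)) * (\<epsilon> * (real k + 1)) * (real k + 1)"
      unfolding c_def P_def by (simp add: power2_eq_square algebra_simps)
    also have "\<dots> = 1" unfolding t4 ek by (simp add: ek)
    finally have "c * P = 1" .
    then show ?thesis unfolding RP by (simp add: algebra_simps)
  qed
  have np: "norm (x 0 - p) ^ 2 \<le> (real N / 2) ^ 2" using N0 by (intro power_mono) auto
  have G: Goal
  proof (rule ccontr)
    assume nG: "\<not> Goal"
    then obtain y where y: "norm (y - p) \<le> real N" "norm (J y - y) \<le> 1 / (real (w (mj R)) + 1)"
        "norm (x 0 - y) ^ 2 \<le> norm (x 0 - p) ^ 2 - real R * c" using ind[of R] by blast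
    from step[OF mjM y(1,2)] nG obtain y' where "norm (x 0 - y') ^ 2 \<le> norm (x 0 - y) ^ 2 - c" by blast
    then have "norm (x 0 - y') ^ 2 \<le> (real N / 2) ^ 2 - real N ^ 2 - c" using y(3) RC np by linarith
    moreover have "(real N / 2) ^ 2 \<le> real N ^ 2" by (simp add: power_divide)
    ultimately have "norm (x 0 - y') ^ 2 < 0" using c0 by linarith
    then show False by simp
  qed
  then show "\<exists>n \<le> psi_bound N \<chi>\<^sub>1 k f. \<exists>y. norm (y - p) \<le> real N \<and>
              norm (resolvent A 1 y - y) \<le> 1 / (real (f n) + 1) \<and>
              (\<forall>i \<ge> n. inner (x 0 - y) (x i - y) \<le> 1 / (real k + 1))"
    unfolding Goal_def J_def \<epsilon>_def .
qed

end
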